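(* There is an absolute constant $C$ such that the following holds for every integer $K\ge2$. Let $\mathcal{Z}=\{z_0,\dots,z_K\}$ with $z_0=\sin^2\frac{\pi}{4K}$, $z_i=\sin^2\frac{\pi i}{2K}$ for $1\le i\le K-1$, and $z_K=\cos^2\frac{\pi}{4K}$. Let $p\in[0,1]$ and let $p^-,p^+$ be neighbouring points of $\mathcal{Z}$ (i.e. $p^-=z_i$, $p^+=z_{i+1}$ for some $i$) with $p^-\le p<p^+$. Let $q$ be the random variable taking value $p^-$ with probability proportional to $\frac{p^+-p}{p^+(1-p^+)}$ and value $p^+$ with probability proportional to $\frac{p-p^-}{p^-(1-p^-)}$. Then for all $y\in\{0,1\}$, $\mathbb{E}[\ell(q,y)]-\ell(p,y)\le \frac{C}{K^2}$, where $\ell$ is the log loss.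
   Context: Log loss: $\ell(p,y)=-y\log p-(1-y)\log(1-p)$. *)

theory Defs
  imports Complex_Main
begin

definition log_loss :: "real \<Rightarrow> real \<Rightarrow> real" where
  "log_loss p y = - y * ln p - (1 - y) * ln (1 - p)"

definition zgrid :: "nat \<Rightarrow> nat \<Rightarrow> real" where
  "zgrid K i =
     (if i = 0 then (sin (pi / (4 * real K)))\<^sup>2
      else if i = K then (cos (pi / (4 * real K)))\<^sup>2
      else (sin (pi * real i / (2 * real K)))\<^sup>2)"

definition w_minus :: "real \<Rightarrow> real \<Rightarrow> real \<Rightarrow> real" where
  "w_minus pm pp p = (pp - p) / (pp * (1 - pp))"

definition w_plus :: "real \<Rightarrow> real \<Rightarrow> real \<Rightarrow> real" where
  "w_plus pm pp p = (p - pm) / (pm * (1 - pm))"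

definition expected_rounded_loss :: "real \<Rightarrow> real \<Rightarrow> real \<Rightarrow> real \<Rightarrow> real" where
  "expected_rounded_loss pm pp p y =
     (let a = w_minus pm pp p; b = w_plus pm pp p
      in (a / (a + b)) * log_loss pm y + (b / (a + b)) * log_loss pp y)"

end

theory Submission
  imports Defs
begin


lemma alg0:
  fixes u v pm pp P Q :: real
  assumes "pm \<noteq> 0" "pp \<noteq> 0" "P \<noteq> 0" "Q \<noteq> 0"
  shows "v/(pp*Q) * (- u/P) + u/(pm*P) * (v/Q) = u*v*(pp-pm)/((pp*Q)*(pm*P))"
  using assms by (simp add: field_simps)

lemma alg1:
  fixes u v pm pp P Q :: real
  assumes "pm \<noteq> 0" "pp \<noteq> 0" "P \<noteq> 0" "Q \<noteq> 0" "P = 1 - pm" "Q = 1 - pp"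
  shows "v/(pp*Q) * (u/pm) + u/(pm*P) * (- v/pp) = u*v*(pp-pm)/((pp*Q)*(pm*P))"
proof -
  have "v/(pp*Q) * (u/pm) + u/(pm*P) * (- v/pp) = u*v*(P-Q)/((pp*Q)*(pm*P))"
    using assms(1-4) by (simp add: field_simps)
  also have "P - Q = pp - pm" using assms by simp
  finally show ?thesis .
qed

lemma core:
  fixes pm pp p y M :: real
  assumes h1: "pm \<le> p" and h2: "p < pp" and hA: "(pp-pm)^2 \<le> M*(pm*(1-pm))"
    and hB: "(pp-pm)^2 \<le> M*(pp*(1-pp))" and hy: "y = 0 \<or> y = 1" and hM: "M \<ge> 0"
  shows "expected_rounded_loss pm pp p y - log_loss p y \<le> M/4"
proof -
  define u where "u = p - pm"
  define v where "v = pp - p"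
  define h where "h = pp - pm"
  define A where "A = pp*(1-pp)"
  define B where "B = pm*(1-pm)"
  have u0: "u \<ge> 0" and v0: "v > 0" and h0: "h > 0" and huv: "h = u + v"
    using h1 h2 by (auto simp: u_def v_def h_def)
  have hh: "0 < h^2" using h0 by simp
  have MA: "0 < M*A" using hh hB unfolding A_def h_def by linarith
  have MB: "0 < M*B" using hh hA unfolding B_def h_def by linarith
  have Mp: "M > 0" using MA hM by (metis less_eq_real_def mult_zero_left)
  have A0: "A > 0" using MA Mp zero_less_mult_pos by blast
  have B0: "B > 0" using MB Mp zero_less_mult_pos by blast
  have pp0: "0 < pp" "pp < 1" using A0 unfolding A_def zero_less_mult_iff by auto
  have pm0: "0 < pm" "pm < 1" using B0 unfolding B_def zero_less_mult_iff by auto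
  have p0: "0 < p" "p < 1" using h1 h2 pp0 pm0 by auto
  define a where "a = v / A"
  define b where "b = u / B"
  have a0: "a > 0" using v0 A0 by (simp add: a_def)
  have b0: "b \<ge> 0" using u0 B0 by (simp add: b_def)
  have ab: "a + b > 0" using a0 b0 by simp
  have wa: "w_minus pm pp p = a" by (simp add: w_minus_def a_def v_def A_def)
  have wb: "w_plus pm pp p = b" by (simp add: w_plus_def b_def u_def B_def)
  have E: "expected_rounded_loss pm pp p y - log_loss p y
      = (a * (log_loss pm y - log_loss p y) + b * (log_loss pp y - log_loss p y)) / (a + b)"
  proof -
    have ne: "a + b \<noteq> 0" using ab by simp
    have "\<And>X Y Z. a/(a+b)*X + b/(a+b)*Y - Z = (a*(X-Z)+b*(Y-Z))/(a+b)"
    proof -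
      fix X Y Z :: real
      have "(a*(X-Z)+b*(Y-Z))/(a+b) = (a*X + b*Y)/(a+b) - (a+b)*Z/(a+b)"
        by (simp add: algebra_simps diff_divide_distrib)
      also have "\<dots> = a/(a+b)*X + b/(a+b)*Y - Z" using ne
        by (simp add: add_divide_distrib)
      finally show "a/(a+b)*X + b/(a+b)*Y - Z = (a*(X-Z)+b*(Y-Z))/(a+b)" by simp
    qed
    thus ?thesis unfolding expected_rounded_loss_def wa wb Let_def by simp
  qed
  have key: "(a * (log_loss pm y - log_loss p y) + b * (log_loss pp y - log_loss p y))
     \<le> u*v*h/(A*B)"
    using hy
  proof
    assume y: "y = 0"
    have l1: "log_loss pm y - log_loss p y \<le> - u/(1-pm)"
    proof -
      have "log_loss pm y - log_loss p y = ln ((1-p)/(1-pm))"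
        using y p0 pm0 by (simp add: log_loss_def ln_div)
      also have "\<dots> \<le> (1-p)/(1-pm) - 1" using p0 pm0 by (intro ln_le_minus_one) simp
      also have "\<dots> = - u/(1-pm)" using pm0 by (simp add: u_def field_simps)
      finally show ?thesis .
    qed
    have l2: "log_loss pp y - log_loss p y \<le> v/(1-pp)"
    proof -
      have "log_loss pp y - log_loss p y = ln ((1-p)/(1-pp))"
        using y p0 pp0 by (simp add: log_loss_def ln_div)
      also have "\<dots> \<le> (1-p)/(1-pp) - 1" using p0 pp0 by (intro ln_le_minus_one) simp
      also have "\<dots> = v/(1-pp)" using pp0 by (simp add: v_def field_simps)
      finally show ?thesis .
    qed
    have "a * (log_loss pm y - log_loss p y) + b * (log_loss pp y - log_loss p y)
        \<le> a * (- u/(1-pm)) + b * (v/(1-pp))"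
      using l1 l2 a0 b0 by (intro add_mono mult_left_mono) auto
    also have "\<dots> = u*v*h/(A*B)"
      unfolding a_def b_def A_def B_def h_def
      by (rule alg0) (use pm0 pp0 in auto)
    finally show ?thesis .
  next
    assume y: "y = 1"
    have l1: "log_loss pm y - log_loss p y \<le> u/pm"
    proof -
      have "log_loss pm y - log_loss p y = ln (p/pm)"
        using y p0 pm0 by (simp add: log_loss_def ln_div)
      also have "\<dots> \<le> p/pm - 1" using p0 pm0 by (intro ln_le_minus_one) simp
      also have "\<dots> = u/pm" using pm0 by (simp add: u_def field_simps)
      finally show ?thesis .
    qed
    have l2: "log_loss pp y - log_loss p y \<le> - v/pp"
    proof -
      have "log_loss pp y - log_loss p y = ln (p/pp)"
        using y p0 pp0 by (simp add: log_loss_def ln_div)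
      also have "\<dots> \<le> p/pp - 1" using p0 pp0 by (intro ln_le_minus_one) simp
      also have "\<dots> = - v/pp" using pp0 by (simp add: v_def field_simps)
      finally show ?thesis .
    qed
    have "a * (log_loss pm y - log_loss p y) + b * (log_loss pp y - log_loss p y)
        \<le> a * (u/pm) + b * (- v/pp)"
      using l1 l2 a0 b0 by (intro add_mono mult_left_mono) auto
    also have "\<dots> = u*v*h/(A*B)"
      unfolding a_def b_def A_def B_def h_def
      by (rule alg1) (use pm0 pp0 in auto)
    finally show ?thesis .
  qed
  define D where "D = v*B + u*A"
  have D0: "D > 0" using v0 B0 u0 A0 unfolding D_def
    by (smt (verit) mult_nonneg_nonneg mult_pos_pos)
  have ab_eq: "a + b = D/(A*B)" using A0 B0 by (simp add: a_def b_def D_def field_simps)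
  have "expected_rounded_loss pm pp p y - log_loss p y \<le> (u*v*h/(A*B)) / (a+b)"
    unfolding E by (rule divide_right_mono[OF key]) (use ab in simp)
  also have "\<dots> = u*v*h/D" using A0 B0 D0 by (simp add: ab_eq)
  also have "\<dots> \<le> M/4"
  proof -
    have "M*D \<ge> h^2 * h"
    proof -
      have "M*D = v*(M*B) + u*(M*A)" by (simp add: D_def algebra_simps)
      also have "\<dots> \<ge> v*h^2 + u*h^2" using hA hB u0 v0
        by (intro add_mono mult_left_mono) (auto simp: A_def B_def h_def)
      finally show ?thesis by (simp add: huv algebra_simps)
    qed
    moreover have "4*u*v \<le> h^2" proof -
      have "0 \<le> (u - v)^2" by simp
      thus ?thesis unfolding huv by (simp add: power2_eq_square algebra_simps)
    qed
    hence "4*u*v*h \<le> h^2*h" using h0 by (simp add: mult_right_mono)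
    ultimately have "4*(u*v*h) \<le> M*D" by simp
    thus ?thesis using D0 by (simp add: field_simps)
  qed
  finally show ?thesis .
qed



lemma sin_le_sin_mid:
  fixes d x :: real
  assumes "0 \<le> d" "d \<le> x" "x \<le> pi - d"
  shows "sin d \<le> sin x"
proof (cases "x \<le> pi/2")
  case True
  thus ?thesis using assms by (intro sin_monotone_2pi_le) auto
next
  case False
  have "sin d \<le> sin (pi - x)" using assms False by (intro sin_monotone_2pi_le) auto
  thus ?thesis by simp
qed

lemma sinstep:
  fixes d x :: real
  assumes "0 \<le> d" "d \<le> x" "x \<le> pi - d"
  shows "sin (x + d) \<le> 2 * sin x" "sin (x - d) \<le> 2 * sin x"
proof -
  have sd: "sin d \<le> sin x" using sin_le_sin_mid[OF assms] .
  have sd0: "0 \<le> sin d" using assms by (intro sin_ge_zero) auto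
  have sx0: "0 \<le> sin x" using assms by (intro sin_ge_zero) auto
  have c1: "sin x * cos d \<le> sin x" using sx0 cos_le_one mult_left_le by blast
  have c2: "cos x * sin d \<le> sin d" using sd0 cos_le_one mult_left_le_one_le
    by (metis mult.commute mult_left_le)
  have c3: "- (cos x * sin d) \<le> sin d"
  proof -
    have "- cos x \<le> 1" using cos_ge_minus_one[of x] by linarith
    hence "(- cos x) * sin d \<le> sin d" using sd0 by (metis mult.commute mult_left_le)
    thus ?thesis by simp
  qed
  show "sin (x + d) \<le> 2 * sin x" unfolding sin_add using c1 c2 sd by linarith
  show "sin (x - d) \<le> 2 * sin x" unfolding sin_diff using c1 c3 sd by linarith
qed

lemma sin_sq_diff: "(sin (b::real))^2 - (sin a)^2 = sin (a + b) * sin (b - a)"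
proof -
  have "sin (a + b) * sin (b - a) = (cos a)^2 * (sin b)^2 - (sin a)^2 * (cos b)^2"
    unfolding sin_add sin_diff by (simp add: power2_eq_square algebra_simps)
  also have "\<dots> = (sin b)^2 - (sin a)^2"
    unfolding cos_squared_eq by (simp add: algebra_simps)
  finally show ?thesis by simp
qed

lemma sin_sq_prod: "(sin (c::real))^2 * (1 - (sin c)^2) = (sin (2*c))^2 / 4"
  unfolding sin_double by (simp add: cos_squared_eq[symmetric] power_mult_distrib)

lemma trig_gen:
  fixes a b c dl :: real
  assumes ab: "0 \<le> b - a" "b - a \<le> dl"
    and ca: "b - a \<le> 2*a" "2*a \<le> pi - (b - a)"
    and cb: "b - a \<le> 2*b" "2*b \<le> pi - (b - a)"
    and c: "c = a \<or> c = b"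
  shows "((sin b)^2 - (sin a)^2)^2 \<le> 16 * dl^2 * ((sin c)^2 * (1 - (sin c)^2))"
proof -
  have s0: "0 \<le> sin (a + b)" using ab ca cb by (intro sin_ge_zero) auto
  have s2: "sin (a + b) \<le> 2 * sin (2*c)" using c
  proof
    assume "c = a"
    thus ?thesis using sinstep(1)[OF ab(1) ca] by (simp add: algebra_simps)
  next
    assume "c = b"
    thus ?thesis using sinstep(2)[OF ab(1) cb] by (simp add: algebra_simps)
  qed
  have sq1: "(sin (a + b))^2 \<le> 4 * (sin (2*c))^2"
  proof -
    have "(sin (a + b))^2 \<le> (2 * sin (2*c))^2" using s0 s2 by (intro power_mono) auto
    thus ?thesis by (simp add: power_mult_distrib)
  qed
  have sq2: "(sin (b - a))^2 \<le> dl^2"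
  proof -
    have "\<bar>sin (b - a)\<bar> \<le> \<bar>b - a\<bar>" by (rule abs_sin_x_le_abs_x)
    also have "\<dots> \<le> \<bar>dl\<bar>" using ab by simp
    finally show ?thesis by (metis abs_le_square_iff power2_abs)
  qed
  have "((sin b)^2 - (sin a)^2)^2 = (sin (a + b))^2 * (sin (b - a))^2"
    unfolding sin_sq_diff by (simp add: power_mult_distrib)
  also have "\<dots> \<le> (4 * (sin (2*c))^2) * dl^2"
    using sq1 sq2 by (intro mult_mono) auto
  also have "\<dots> = 16 * dl^2 * ((sin c)^2 * (1 - (sin c)^2))"
    unfolding sin_sq_prod by simp
  finally show ?thesis .
qed



lemma grid_cases:
  fixes K i :: nat
  assumes K: "K \<ge> 2" and i: "i < K"
  defines "dl \<equiv> pi / (2 * real K)"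
  shows "\<exists>a b. zgrid K i = (sin a)^2 \<and> zgrid K (i+1) = (sin b)^2 \<and>
     0 \<le> b - a \<and> b - a \<le> dl \<and> b - a \<le> 2*a \<and> 2*a \<le> pi - (b - a) \<and>
     b - a \<le> 2*b \<and> 2*b \<le> pi - (b - a)"
proof -
  have Kp: "real K > 0" using K by simp
  have dl0: "dl > 0" using Kp by (simp add: dl_def)
  have pieq: "pi = 2 * real K * dl" using Kp by (simp add: dl_def)
  have q: "pi / (4 * real K) = dl / 2" by (simp add: dl_def)
  have qi: "\<And>j. pi * real j / (2 * real K) = real j * dl" by (simp add: dl_def)
  consider "i = 0" | "1 \<le> i" "i + 1 < K" | "1 \<le> i" "i + 1 = K" using i K by linarith
  thus ?thesis
  proof cases
    case 1
    have z0: "zgrid K i = (sin (dl/2))^2" using 1 by (simp add: zgrid_def q)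
    have z1: "zgrid K (i+1) = (sin dl)^2" using 1 K by (simp add: zgrid_def dl_def)
    have "4 * dl \<le> 2 * real K * dl" using K dl0 by (intro mult_right_mono) auto
    hence "2*dl \<le> pi - dl/2" using pieq dl0 by linarith
    thus ?thesis using z0 z1 dl0 by (intro exI[of _ "dl/2"] exI[of _ dl]) auto
  next
    case 2
    have z0: "zgrid K i = (sin (real i * dl))^2" using 2 by (simp add: zgrid_def qi del: of_nat_Suc)
    have z1: "zgrid K (i+1) = (sin (real (i+1) * dl))^2" using 2 by (simp add: zgrid_def qi del: of_nat_Suc)
    have "(2 * real i + 3) * dl \<le> (2 * real K) * dl" using 2 dl0 by (intro mult_right_mono) auto
    hence c1: "2 * (real (i+1) * dl) \<le> pi - dl" using pieq by (simp add: algebra_simps)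
    have "1 * dl \<le> real i * dl" using 2 dl0 by (intro mult_right_mono) auto
    hence c2: "dl \<le> real i * dl" by simp
    have "real (i+1) * dl - real i * dl = dl" by (simp add: algebra_simps)
    thus ?thesis using z0 z1 dl0 c1 c2
      by (intro exI[of _ "real i * dl"] exI[of _ "real (i+1) * dl"]) auto
  next
    case 3
    have z0: "zgrid K i = (sin (real i * dl))^2" using 3 by (simp add: zgrid_def qi del: of_nat_Suc)
    have "zgrid K (i+1) = (cos (dl/2))^2" using 3 by (simp add: zgrid_def q)
    hence z1: "zgrid K (i+1) = (sin (pi/2 - dl/2))^2" by (simp add: cos_sin_eq)
    have ri: "real i = real K - 1" using 3 by linarith
    have e1: "real i * dl = (real K - 1) * dl" by (simp only: ri)
    have e: "real i * dl = pi/2 - dl" unfolding e1 pieq by (simp add: algebra_simps)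
    have "1 * dl \<le> real i * dl" using 3 dl0 by (intro mult_right_mono) auto
    hence c2: "dl \<le> real i * dl" by simp
    have "dl \<le> pi/2 - dl" using c2 e by simp
    thus ?thesis using z0 z1 dl0 e
      by (intro exI[of _ "real i * dl"] exI[of _ "pi/2 - dl/2"]) auto
  qed
qed


theorem lemma5:
  shows "\<exists>C::real. \<forall>K::nat. K \<ge> 2 \<longrightarrow>
     (\<forall>i::nat. \<forall>p::real. \<forall>y::real.
        i < K \<longrightarrow> 0 \<le> p \<longrightarrow> p \<le> 1 \<longrightarrow>
        zgrid K i \<le> p \<longrightarrow> p < zgrid K (i + 1) \<longrightarrow>
        (y = 0 \<or> y = 1) \<longrightarrow>
        expected_rounded_loss (zgrid K i) (zgrid K (i + 1)) p y - log_loss p y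
          \<le> C / (real K)\<^sup>2)"
proof (intro exI[of _ "pi^2"] allI impI)
  fix K i :: nat and p y :: real
  assume K: "K \<ge> 2" and i: "i < K" and p1: "zgrid K i \<le> p" and p2: "p < zgrid K (i + 1)"
    and y: "y = 0 \<or> y = 1"
  define dl where "dl = pi / (2 * real K)"
  obtain a b where z: "zgrid K i = (sin a)^2" "zgrid K (i+1) = (sin b)^2"
    and c: "0 \<le> b - a" "b - a \<le> dl" "b - a \<le> 2*a" "2*a \<le> pi - (b - a)"
      "b - a \<le> 2*b" "2*b \<le> pi - (b - a)"
    using grid_cases[OF K i] unfolding dl_def by blast
  have hA: "(zgrid K (i+1) - zgrid K i)^2 \<le> (16 * dl^2) * (zgrid K i * (1 - zgrid K i))"
    unfolding z by (rule trig_gen[OF c]) simp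
  have hB: "(zgrid K (i+1) - zgrid K i)^2 \<le> (16 * dl^2) * (zgrid K (i+1) * (1 - zgrid K (i+1)))"
    unfolding z by (rule trig_gen[OF c]) simp
  have "expected_rounded_loss (zgrid K i) (zgrid K (i + 1)) p y - log_loss p y \<le> (16 * dl^2) / 4"
    by (rule core[OF p1 p2 hA hB y]) simp
  also have "(16 * dl^2) / 4 = pi^2 / (real K)^2"
    unfolding dl_def by (simp add: power_divide power_mult_distrib)
  finally show "expected_rounded_loss (zgrid K i) (zgrid K (i + 1)) p y - log_loss p y
          \<le> pi^2 / (real K)\<^sup>2" .
qed

end
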